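(* The set of estimable families of processes is closed under addition and multiplication. For every power series $q$ negligible to double factorial, $\mathbb{E}[|q|(\widetilde W^*_T)]<\infty$. Consequently, if $(M_t(x))_{t\le T,x\in\mathbb{R}}$ is estimable, there exist a power series $q$ negligible to double factorial and a constant $C$ such that $\mathbb{E}[|M_t(x)|]\le|q|(|x|)+C$ for all $t\in[0,T]$, $x\in\mathbb{R}$.
   Context: Let $W$ be a Brownian motion, $b\in\mathbb{R}$, $c\ne0$, $T>0$; $\widetilde W_t=c\int_0^te^{b(t-s)}dW_s$, $\widetilde W^*_T=\sup_{s\le T}|\widetilde W_s|$. For a power series $q$, $|q|(x):=\sum_k|q_k|x^k$. A power series is negligible to double factorial if $\limsup_k(|q_k|(k-1)!!)^{1/k}=0$, $(-1)!!=0!!=1$. A family $(M_t(x))_{t\le T,x\in\mathbb{R}}$ is estimable if there is a power series $r$ negligible to double factorial such that for all fixed $t,x$, $|M_t(x)|\le|r|(|x|)+|r|(\widetilde W^*_T)$ a.s. *)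

theory Defs
  imports "HOL-Probability.Probability"
begin

text \<open>Double factorial on naturals; (k-1)!! with the convention (-1)!! = 0!! = 1.\<close>
fun dfact :: "nat \<Rightarrow> nat" where
  "dfact 0 = 1"
| "dfact (Suc 0) = 1"
| "dfact (Suc (Suc n)) = Suc (Suc n) * dfact n"

definition dfact_pred :: "nat \<Rightarrow> nat" where
  "dfact_pred k = (if k = 0 then 1 else dfact (k - 1))"

definition ps_abs :: "(nat \<Rightarrow> real) \<Rightarrow> real \<Rightarrow> real" where
  "ps_abs q x = (\<Sum>k. \<bar>q k\<bar> * x ^ k)"

definition negligible_dfact :: "(nat \<Rightarrow> real) \<Rightarrow> bool" where
  "negligible_dfact q \<longleftrightarrow>
     limsup (\<lambda>k. ereal (root k (\<bar>q k\<bar> * real (dfact_pred k)))) = 0"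

definition brownian_motion :: "'a measure \<Rightarrow> (real \<Rightarrow> 'a \<Rightarrow> real) \<Rightarrow> bool" where
  "brownian_motion M W \<longleftrightarrow>
     prob_space M \<and>
     (\<forall>t. W t \<in> borel_measurable M) \<and>
     (\<forall>\<omega>\<in>space M. W 0 \<omega> = 0 \<and> continuous_on {0..} (\<lambda>t. W t \<omega>)) \<and>
     (\<forall>s t. 0 \<le> s \<and> s < t \<longrightarrow>
        distributed M lborel (\<lambda>\<omega>. W t \<omega> - W s \<omega>) (\<lambda>x. ennreal (normal_density 0 (sqrt (t - s)) x))) \<and>
     (\<forall>(n::nat) (\<tau>::nat \<Rightarrow> real). 0 \<le> \<tau> 0 \<and> (\<forall>i<n. \<tau> i < \<tau> (Suc i)) \<longrightarrow>
        prob_space.indep_vars M (\<lambda>_. borel) (\<lambda>i \<omega>. W (\<tau> (Suc i)) \<omega> - W (\<tau> i) \<omega>) {..<n})"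

text \<open>The Wiener integral c * int_0^t e^{b(t-s)} dW_s, written pathwise via integration by parts:
  int_0^t e^{b(t-s)} dW_s = W_t + b * int_0^t e^{b(t-s)} W_s ds.\<close>
definition OU_proc :: "real \<Rightarrow> real \<Rightarrow> (real \<Rightarrow> 'a \<Rightarrow> real) \<Rightarrow> real \<Rightarrow> 'a \<Rightarrow> real" where
  "OU_proc b c W t \<omega> = c * (W t \<omega> + b * integral {0..t} (\<lambda>s. exp (b * (t - s)) * W s \<omega>))"

definition OU_sup :: "real \<Rightarrow> real \<Rightarrow> (real \<Rightarrow> 'a \<Rightarrow> real) \<Rightarrow> real \<Rightarrow> 'a \<Rightarrow> real" where
  "OU_sup b c W T \<omega> = (SUP s\<in>{0..T}. \<bar>OU_proc b c W s \<omega>\<bar>)"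

definition estimable ::
  "'a measure \<Rightarrow> real \<Rightarrow> real \<Rightarrow> (real \<Rightarrow> 'a \<Rightarrow> real) \<Rightarrow> real \<Rightarrow> (real \<Rightarrow> real \<Rightarrow> 'a \<Rightarrow> real) \<Rightarrow> bool" where
  "estimable M b c W T F \<longleftrightarrow>
     (\<exists>r. negligible_dfact r \<and>
        (\<forall>t\<in>{0..T}. \<forall>x. AE \<omega> in M. \<bar>F t x \<omega>\<bar> \<le> ps_abs r \<bar>x\<bar> + ps_abs r (OU_sup b c W T \<omega>)))"

end

theory Submission
  imports Defs
begin

definition negl_G :: "(nat \<Rightarrow> real) \<Rightarrow> bool" where
  "negl_G q \<longleftrightarrow> (\<forall>e>0. \<exists>C. \<forall>k. \<bar>q k\<bar> * fact (k div 2) \<le> C * e ^ k)"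

lemma limsup_root_zero_iff:
  fixes a :: "nat \<Rightarrow> real"
  assumes nn: "\<And>k. 0 \<le> a k"
  shows "limsup (\<lambda>k. ereal (root k (a k))) = 0 \<longleftrightarrow> (\<forall>e>0. \<exists>C. \<forall>k. a k \<le> C * e ^ k)"
proof
  assume L: "limsup (\<lambda>k. ereal (root k (a k))) = 0"
  show "\<forall>e>0. \<exists>C. \<forall>k. a k \<le> C * e ^ k"
  proof (intro allI impI)
    fix e :: real assume e: "e > 0"
    have "eventually (\<lambda>k. ereal (root k (a k)) < ereal e) sequentially"
      by (rule Limsup_lessD) (use L e in simp)
    then obtain N where N: "\<And>k. k \<ge> N \<Longrightarrow> root k (a k) < e"
      by (auto simp: eventually_sequentially)
    define C where "C = 1 + (\<Sum>k<Suc N. a k / e ^ k)"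
    have "a k \<le> C * e ^ k" for k
    proof (cases "k \<le> N")
      case True
      have "a k / e ^ k \<le> (\<Sum>k<Suc N. a k / e ^ k)"
        by (rule member_le_sum) (use True nn e in auto)
      then have "a k / e ^ k \<le> C" unfolding C_def by linarith
      then show ?thesis using e by (simp add: divide_le_eq mult.commute)
    next
      case False
      then have k: "k > 0" "k \<ge> N" by auto
      have "a k = (root k (a k)) ^ k" using k nn by (simp add: real_root_pow_pos2)
      also have "\<dots> \<le> e ^ k" using N[OF k(2)] k nn
        by (intro power_mono) (auto simp: real_root_ge_zero)
      also have "\<dots> \<le> C * e ^ k"
      proof -
        have "0 \<le> (\<Sum>k<Suc N. a k / e ^ k)" using nn e by (intro sum_nonneg) auto
        then have "1 \<le> C" unfolding C_def by linarith
        then show ?thesis using e by (simp add: mult_le_cancel_right1)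
      qed
      finally show ?thesis .
    qed
    then show "\<exists>C. \<forall>k. a k \<le> C * e ^ k" by blast
  qed
next
  assume B: "\<forall>e>0. \<exists>C. \<forall>k. a k \<le> C * e ^ k"
  have "(\<lambda>k. root k (a k)) \<longlonglongrightarrow> 0"
  proof (rule tendstoI)
    fix e :: real assume e: "e > 0"
    obtain C0 where C0: "\<And>k. a k \<le> C0 * (e/4) ^ k" using B e by (meson divide_pos_pos zero_less_numeral)
    define C where "C = max C0 1"
    have C: "a k \<le> C * (e/4) ^ k" for k
      using C0[of k] e unfolding C_def by (smt (verit) mult_right_mono zero_le_power divide_nonneg_pos)
    have "(\<lambda>k. root k C) \<longlonglongrightarrow> 1" using C_def by (intro LIMSEQ_root_const) auto
    then have "eventually (\<lambda>k. dist (root k C) 1 < 1) sequentially"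
      by (rule tendstoD) simp
    then have ev: "eventually (\<lambda>k. root k C < 2 \<and> k > 0) sequentially"
      using eventually_gt_at_top[of 0] by eventually_elim (auto simp: dist_real_def)
    show "eventually (\<lambda>k. dist (root k (a k)) 0 < e) sequentially"
      using ev
    proof eventually_elim
      case (elim k)
      have "root k (a k) \<le> root k (C * (e/4) ^ k)" using C elim by (simp add: real_root_le_iff)
      also have "\<dots> = root k C * (e/4)"
        unfolding real_root_mult using elim e by (subst real_root_power_cancel) auto
      also have "\<dots> < 2 * (e/4)" using elim e by (intro mult_strict_right_mono) auto
      also have "\<dots> < e" using e by simp
      finally show ?case using nn[of k] by (simp add: dist_real_def real_root_ge_zero)
    qed
  qed
  then have "(\<lambda>k. ereal (root k (a k))) \<longlonglongrightarrow> ereal 0" by (simp add: tendsto_ereal)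
  then show "limsup (\<lambda>k. ereal (root k (a k))) = 0"
    by (simp add: lim_imp_Limsup zero_ereal_def)
qed

lemma dfact_bounds: "fact ((n+1) div 2) \<le> dfact n \<and> dfact n \<le> 2^(n+1) * fact ((n+1) div 2)"
proof (induction n rule: dfact.induct)
  case 1 then show ?case by simp
next
  case 2 then show ?case by simp
next
  case (3 n)
  have e: "(Suc (Suc n) + 1) div 2 = Suc ((n+1) div 2)" by simp
  have f: "fact ((Suc (Suc n) + 1) div 2) = Suc ((n+1) div 2) * (fact ((n+1) div 2) :: nat)"
    unfolding e by simp
  have a1: "Suc ((n+1) div 2) \<le> Suc (Suc n)" by simp
  have a2: "Suc (Suc n) \<le> 4 * Suc ((n+1) div 2)" by simp
  show ?case
  proof
    show "fact ((Suc (Suc n) + 1) div 2) \<le> dfact (Suc (Suc n))"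
      unfolding f dfact.simps using 3 a1 by (intro mult_le_mono) auto
    have "dfact (Suc (Suc n)) = Suc (Suc n) * dfact n" by simp
    also have "\<dots> \<le> (4 * Suc ((n+1) div 2)) * (2^(n+1) * fact ((n+1) div 2))"
      using 3 a2 by (intro mult_le_mono) auto
    also have "\<dots> = 2^(Suc (Suc n)+1) * fact ((Suc (Suc n) + 1) div 2)"
      unfolding f by (simp add: power_add algebra_simps)
    finally show "dfact (Suc (Suc n)) \<le> 2^(Suc (Suc n)+1) * fact ((Suc (Suc n) + 1) div 2)" .
  qed
qed

lemma dfact_pred_bounds: "fact (k div 2) \<le> dfact_pred k" "dfact_pred k \<le> 2^k * fact (k div 2)"
proof -
  have "fact (k div 2) \<le> dfact_pred k \<and> dfact_pred k \<le> 2^k * fact (k div 2)"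
  proof (cases k)
    case 0 then show ?thesis by (simp add: dfact_pred_def)
  next
    case (Suc n) then show ?thesis using dfact_bounds[of n] by (simp add: dfact_pred_def)
  qed
  then show "fact (k div 2) \<le> dfact_pred k" "dfact_pred k \<le> 2^k * fact (k div 2)" by auto
qed

lemma dfact_pred_bounds_real: "(fact (k div 2) :: real) \<le> real (dfact_pred k)"
   "real (dfact_pred k) \<le> 2^k * fact (k div 2)"
proof -
  show "(fact (k div 2) :: real) \<le> real (dfact_pred k)"
    using dfact_pred_bounds(1)[of k] by (metis of_nat_fact of_nat_le_iff)
  have "real (dfact_pred k) \<le> real (2^k * fact (k div 2))"
    using dfact_pred_bounds(2)[of k] by (metis of_nat_le_iff)
  then show "real (dfact_pred k) \<le> 2^k * fact (k div 2)" by simp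
qed

lemma negligible_iff: "negligible_dfact q \<longleftrightarrow> negl_G q"
proof -
  have "negligible_dfact q \<longleftrightarrow> (\<forall>e>0. \<exists>C. \<forall>k. \<bar>q k\<bar> * real (dfact_pred k) \<le> C * e ^ k)"
    unfolding negligible_dfact_def by (rule limsup_root_zero_iff) simp
  also have "\<dots> \<longleftrightarrow> negl_G q"
  proof
    assume H: "\<forall>e>0. \<exists>C. \<forall>k. \<bar>q k\<bar> * real (dfact_pred k) \<le> C * e ^ k"
    show "negl_G q" unfolding negl_G_def
    proof (intro allI impI)
      fix e :: real assume "e > 0"
      then obtain C where C: "\<And>k. \<bar>q k\<bar> * real (dfact_pred k) \<le> C * e ^ k" using H by blast
      have "\<bar>q k\<bar> * fact (k div 2) \<le> C * e ^ k" for k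
        using C[of k] dfact_pred_bounds_real(1)[of k] by (smt (verit) abs_ge_zero mult_left_mono)
      then show "\<exists>C. \<forall>k. \<bar>q k\<bar> * fact (k div 2) \<le> C * e ^ k" by blast
    qed
  next
    assume H: "negl_G q"
    show "\<forall>e>0. \<exists>C. \<forall>k. \<bar>q k\<bar> * real (dfact_pred k) \<le> C * e ^ k"
    proof (intro allI impI)
      fix e :: real assume e: "e > 0"
      then obtain C where C: "\<And>k. \<bar>q k\<bar> * fact (k div 2) \<le> C * (e/2) ^ k"
        using H unfolding negl_G_def by (meson half_gt_zero)
      have "\<bar>q k\<bar> * real (dfact_pred k) \<le> C * e ^ k" for k
      proof -
        have "\<bar>q k\<bar> * real (dfact_pred k) \<le> \<bar>q k\<bar> * (2^k * fact (k div 2))"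
          using dfact_pred_bounds_real(2)[of k] by (simp add: mult_left_mono)
        also have "\<dots> = 2^k * (\<bar>q k\<bar> * fact (k div 2))" by simp
        also have "\<dots> \<le> 2^k * (C * (e/2)^k)" using C[of k] by (simp add: mult_left_mono)
        also have "\<dots> = C * e ^ k" by (simp add: power_divide)
        finally show ?thesis .
      qed
      then show "\<exists>C. \<forall>k. \<bar>q k\<bar> * real (dfact_pred k) \<le> C * e ^ k" by blast
    qed
  qed
  finally show ?thesis .
qed

lemma negl_G_summable_fact:
  assumes q: "negl_G q" and A: "A \<ge> 0"
  shows "summable (\<lambda>k. \<bar>q k\<bar> * fact (k div 2) * A ^ k)"
proof -
  have "1/(2*A+1) > 0" using A by simp
  then obtain C where C: "\<And>k. \<bar>q k\<bar> * fact (k div 2) \<le> C * (1/(2*A+1)) ^ k"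
    using q unfolding negl_G_def by blast
  have b: "norm (\<bar>q k\<bar> * fact (k div 2) * A ^ k) \<le> C * (1/2) ^ k" for k
  proof -
    have "norm (\<bar>q k\<bar> * fact (k div 2) * A ^ k) = (\<bar>q k\<bar> * fact (k div 2)) * A ^ k"
      using A by simp
    also have "\<dots> \<le> (C * (1/(2*A+1)) ^ k) * A ^ k"
      using C[of k] A by (intro mult_right_mono) auto
    also have "\<dots> = C * (A/(2*A+1)) ^ k" by (simp add: power_divide)
    also have "\<dots> \<le> C * (1/2) ^ k"
    proof -
      have C0: "C \<ge> 0" using C[of 0] abs_ge_zero[of "q 0"] by simp
      have "A/(2*A+1) \<le> 1/2" using A by (simp add: divide_simps)
      then have "(A/(2*A+1)) ^ k \<le> (1/2) ^ k" using A by (intro power_mono) auto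
      then show ?thesis using C0 by (intro mult_left_mono) auto
    qed
    finally show ?thesis .
  qed
  show ?thesis
    by (rule summable_comparison_test[OF _ summable_mult[OF summable_geometric]])
       (use b in auto)
qed

lemma negl_G_summable:
  assumes q: "negl_G q"
  shows "summable (\<lambda>k. \<bar>q k\<bar> * \<bar>x\<bar> ^ k)" "summable (\<lambda>k. \<bar>q k\<bar> * x ^ k)"
proof -
  have s: "summable (\<lambda>k. \<bar>q k\<bar> * fact (k div 2) * \<bar>x\<bar> ^ k)"
    by (rule negl_G_summable_fact[OF q]) simp
  have le: "\<bar>q k\<bar> * \<bar>x\<bar> ^ k \<le> \<bar>q k\<bar> * fact (k div 2) * \<bar>x\<bar> ^ k" for k
  proof -
    have "\<bar>q k\<bar> * \<bar>x\<bar> ^ k * 1 \<le> \<bar>q k\<bar> * \<bar>x\<bar> ^ k * fact (k div 2)"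
      by (intro mult_left_mono) auto
    then show ?thesis by (simp add: ac_simps)
  qed
  show "summable (\<lambda>k. \<bar>q k\<bar> * \<bar>x\<bar> ^ k)"
    by (rule summable_comparison_test[OF _ s]) (use le in auto)
  then show "summable (\<lambda>k. \<bar>q k\<bar> * x ^ k)"
    by (rule summable_comparison_test[rotated]) (auto simp: abs_mult power_abs)
qed

lemma ps_abs_nonneg: "x \<ge> 0 \<Longrightarrow> negl_G q \<Longrightarrow> ps_abs q x \<ge> 0"
  unfolding ps_abs_def using negl_G_summable(2)[of q x]
  by (intro suminf_nonneg) auto

lemma ps_abs_mono: "0 \<le> x \<Longrightarrow> x \<le> y \<Longrightarrow> negl_G q \<Longrightarrow> ps_abs q x \<le> ps_abs q y"
  unfolding ps_abs_def using negl_G_summable(2)[of q x] negl_G_summable(2)[of q y]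
  by (intro suminf_le) (auto intro!: mult_left_mono power_mono)

lemma negl_G_add:
  assumes "negl_G r1" "negl_G r2"
  shows "negl_G (\<lambda>k. \<bar>r1 k\<bar> + \<bar>r2 k\<bar>)"
  unfolding negl_G_def
proof (intro allI impI)
  fix e :: real assume "e > 0"
  then obtain C1 C2 where C1: "\<And>k. \<bar>r1 k\<bar> * fact (k div 2) \<le> C1 * e ^ k"
    and C2: "\<And>k. \<bar>r2 k\<bar> * fact (k div 2) \<le> C2 * e ^ k"
    using assms unfolding negl_G_def by meson
  have "\<bar>\<bar>r1 k\<bar> + \<bar>r2 k\<bar>\<bar> * fact (k div 2) \<le> (C1 + C2) * e ^ k" for k
    using C1[of k] C2[of k] by (simp add: algebra_simps)
  then show "\<exists>C. \<forall>k. \<bar>\<bar>r1 k\<bar> + \<bar>r2 k\<bar>\<bar> * fact (k div 2) \<le> C * e ^ k" by blast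
qed

lemma ps_abs_add:
  assumes "negl_G r1" "negl_G r2"
  shows "ps_abs (\<lambda>k. \<bar>r1 k\<bar> + \<bar>r2 k\<bar>) x = ps_abs r1 x + ps_abs r2 x"
proof -
  have "ps_abs (\<lambda>k. \<bar>r1 k\<bar> + \<bar>r2 k\<bar>) x = (\<Sum>k. \<bar>r1 k\<bar> * x^k + \<bar>r2 k\<bar> * x^k)"
    unfolding ps_abs_def by (simp add: algebra_simps)
  also have "\<dots> = ps_abs r1 x + ps_abs r2 x"
    unfolding ps_abs_def
    by (rule suminf_add[symmetric]) (use negl_G_summable(2) assms in auto)
  finally show ?thesis .
qed

lemma fact_add_le: "(fact (a + b) :: real) \<le> 2 ^ (a + b) * fact a * fact b"
proof -
  have "fact a * fact b * ((a+b) choose a) = (fact (a+b) :: nat)"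
    using binomial_fact_lemma[of a "a+b"] by simp
  then have "(fact (a+b) :: real) = fact a * fact b * real ((a+b) choose a)"
    by (metis of_nat_fact of_nat_mult)
  also have "\<dots> \<le> fact a * fact b * 2 ^ (a+b)"
    using binomial_le_pow2[of "a+b" a] by (intro mult_left_mono) (auto simp: of_nat_le_iff[symmetric])
  finally show ?thesis by (simp add: ac_simps)
qed

lemma fact_div2_split:
  assumes "i \<le> k"
  shows "(fact (k div 2) :: real) \<le> 2 * 4 ^ k * fact (i div 2) * fact ((k - i) div 2)"
proof -
  define a where "a = i div 2"
  define b where "b = (k - i) div 2"
  have kab: "k div 2 \<le> a + b + 1" using assms unfolding a_def b_def by linarith
  have "(fact (k div 2) :: real) \<le> fact (a + b + 1)" using kab by (rule fact_mono)
  also have "\<dots> = real (a + b + 1) * fact (a + b)" by (simp add: algebra_simps)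
  also have "\<dots> \<le> 2 ^ (a+b+1) * (2 ^ (a + b) * fact a * fact b)"
  proof (intro mult_mono fact_add_le)
    have "real (a+b+1) < 2 ^ (a+b+1)" by (metis of_nat_less_two_power)
    then show "real (a + b + 1) \<le> 2 ^ (a + b + 1)" by simp
  qed auto
  also have "\<dots> = 2 * 4 ^ (a+b) * fact a * fact b"
  proof -
    have h4: "(4::real)^n = 2^n * 2^n" for n by (induction n) auto
    show ?thesis by (simp add: h4 power_add)
  qed
  also have "\<dots> \<le> 2 * 4 ^ k * fact a * fact b"
  proof -
    have "a + b \<le> k" using assms unfolding a_def b_def by linarith
    then have "(4::real) ^ (a+b) \<le> 4 ^ k" by (intro power_increasing) auto
    then show ?thesis by (intro mult_right_mono) auto
  qed
  finally show ?thesis unfolding a_def b_def .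
qed

definition csq :: "(nat \<Rightarrow> real) \<Rightarrow> nat \<Rightarrow> real" where
  "csq r k = 2 * (\<Sum>i\<le>k. \<bar>r i\<bar> * \<bar>r (k - i)\<bar>)"

lemma negl_G_csq:
  assumes r: "negl_G r"
  shows "negl_G (csq r)"
  unfolding negl_G_def
proof (intro allI impI)
  fix e :: real assume e: "e > 0"
  then obtain C where C: "\<And>k. \<bar>r k\<bar> * fact (k div 2) \<le> C * (e/8) ^ k"
    using r unfolding negl_G_def by (meson divide_pos_pos zero_less_numeral)
  have "\<bar>csq r k\<bar> * fact (k div 2) \<le> (4 * C^2) * e ^ k" for k
  proof -
    have t: "\<bar>r i\<bar> * \<bar>r (k - i)\<bar> * fact (k div 2) \<le> 2 * 4 ^ k * (C^2 * (e/8)^k)" if "i \<le> k" for i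
    proof -
      have "\<bar>r i\<bar> * \<bar>r (k - i)\<bar> * fact (k div 2)
          \<le> \<bar>r i\<bar> * \<bar>r (k - i)\<bar> * (2 * 4 ^ k * fact (i div 2) * fact ((k - i) div 2))"
        using fact_div2_split[OF that] by (intro mult_left_mono) auto
      also have "\<dots> = 2 * 4 ^ k * ((\<bar>r i\<bar> * fact (i div 2)) * (\<bar>r (k - i)\<bar> * fact ((k - i) div 2)))"
        by (simp only: ac_simps)
      also have "\<dots> \<le> 2 * 4 ^ k * ((C * (e/8) ^ i) * (C * (e/8) ^ (k - i)))"
      proof (intro mult_left_mono)
        have C0: "C \<ge> 0" using C[of 0] abs_ge_zero[of "q 0"] by simp
        show "(\<bar>r i\<bar> * fact (i div 2)) * (\<bar>r (k - i)\<bar> * fact ((k - i) div 2))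
              \<le> (C * (e/8) ^ i) * (C * (e/8) ^ (k - i))"
          by (rule mult_mono[OF C[of i] C[of "k-i"]]) (use C0 e in auto)
      qed auto
      also have "\<dots> = 2 * 4 ^ k * (C^2 * (e/8)^k)"
        using that by (simp add: power2_eq_square ac_simps power_add[symmetric])
      finally show ?thesis .
    qed
    have "\<bar>csq r k\<bar> * fact (k div 2) = 2 * (\<Sum>i\<le>k. \<bar>r i\<bar> * \<bar>r (k - i)\<bar> * fact (k div 2))"
      unfolding csq_def by (simp add: sum_distrib_right sum_nonneg abs_of_nonneg)
    also have "\<dots> \<le> 2 * (\<Sum>i\<le>k. 2 * 4 ^ k * (C^2 * (e/8)^k))"
      using t by (intro mult_left_mono sum_mono) auto
    also have "\<dots> = 4 * C^2 * (real (k+1) * (4 * (e/8))^k)"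
      by (simp add: power_mult_distrib[symmetric])
    also have "\<dots> = 4 * C^2 * (real (k+1) * (e/2)^k)" by simp
    also have "\<dots> \<le> 4 * C^2 * e^k"
    proof -
      have "real (k+1) \<le> 2^k"
        by (metis Suc_eq_plus1 Suc_leI of_nat_le_iff of_nat_numeral of_nat_power less_exp)
      then have "real (k+1) * (e/2)^k \<le> 2^k * (e/2)^k"
        using e by (intro mult_right_mono) auto
      also have "\<dots> = e^k" by (simp add: power_divide)
      finally show ?thesis by (intro mult_left_mono) auto
    qed
    finally show ?thesis by simp
  qed
  then show "\<exists>C. \<forall>k. \<bar>csq r k\<bar> * fact (k div 2) \<le> C * e ^ k" by blast
qed

lemma ps_abs_csq:
  assumes r: "negl_G r"
  shows "ps_abs (csq r) x = 2 * (ps_abs r x)^2"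
proof -
  have s: "summable (\<lambda>k. norm (\<bar>r k\<bar> * x ^ k))"
    using negl_G_summable(1)[OF r, of x] by (simp add: abs_mult power_abs)
  have "(\<lambda>k. \<Sum>i\<le>k. (\<bar>r i\<bar> * x ^ i) * (\<bar>r (k - i)\<bar> * x ^ (k - i))) sums
          ((\<Sum>k. \<bar>r k\<bar> * x ^ k) * (\<Sum>k. \<bar>r k\<bar> * x ^ k))"
    by (rule Cauchy_product_sums[OF s s])
  moreover have "(\<Sum>i\<le>k. (\<bar>r i\<bar> * x ^ i) * (\<bar>r (k - i)\<bar> * x ^ (k - i))) =
      (\<Sum>i\<le>k. \<bar>r i\<bar> * \<bar>r (k - i)\<bar>) * x ^ k" for k
    unfolding sum_distrib_right
    by (intro sum.cong refl) (simp add: power_add[symmetric] ac_simps)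
  ultimately have "(\<lambda>k. (\<Sum>i\<le>k. \<bar>r i\<bar> * \<bar>r (k - i)\<bar>) * x ^ k) sums ((ps_abs r x)^2)"
    unfolding ps_abs_def by (simp add: power2_eq_square)
  then have SM: "(\<lambda>k. 2 * ((\<Sum>i\<le>k. \<bar>r i\<bar> * \<bar>r (k - i)\<bar>) * x ^ k)) sums (2 * (ps_abs r x)^2)"
    by (rule sums_mult)
  have "(\<lambda>k. \<bar>csq r k\<bar> * x ^ k) sums (2 * (ps_abs r x)^2)"
  proof -
    have "\<bar>csq r k\<bar> * x ^ k = 2 * ((\<Sum>i\<le>k. \<bar>r i\<bar> * \<bar>r (k - i)\<bar>) * x ^ k)" for k
    proof -
      have "csq r k \<ge> 0" unfolding csq_def by (intro mult_nonneg_nonneg sum_nonneg) auto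
      then show ?thesis unfolding csq_def by simp
    qed
    then have "(\<lambda>k. \<bar>csq r k\<bar> * x ^ k) = (\<lambda>k. 2 * ((\<Sum>i\<le>k. \<bar>r i\<bar> * \<bar>r (k - i)\<bar>) * x ^ k))"
      by (rule ext)
    then show ?thesis using SM by simp
  qed
  then show ?thesis unfolding ps_abs_def by (rule sums_unique[symmetric])
qed

lemma OU_path_bound:
  fixes f :: "real \<Rightarrow> real"
  assumes cont: "continuous_on {0..} f" and T: "0 < T" and Mf: "\<And>s. s \<in> {0..T} \<Longrightarrow> \<bar>f s\<bar> \<le> Mf"
    and t: "t \<in> {0..T}"
  shows "\<bar>c * (f t + b * integral {0..t} (\<lambda>s. exp (b*(t-s)) * f s))\<bar> \<le> \<bar>c\<bar> * (1 + \<bar>b\<bar>*T*exp(\<bar>b\<bar>*T)) * Mf"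
proof -
  have Mf0: "0 \<le> Mf" using Mf[of 0] T by auto
  have contg: "continuous_on {0..t} (\<lambda>s. exp (b*(t-s)) * f s)"
    by (intro continuous_intros continuous_on_subset[OF cont]) auto
  have gb: "norm (exp (b*(t-s)) * f s) \<le> exp(\<bar>b\<bar>*T) * Mf" if s: "s \<in> {0..t}" for s
  proof -
    have "b*(t-s) \<le> \<bar>b\<bar>*T"
    proof -
      have "b*(t-s) \<le> \<bar>b\<bar>*(t-s)" using s by (intro mult_right_mono) auto
      also have "\<dots> \<le> \<bar>b\<bar>*T" using s t by (intro mult_left_mono) auto
      finally show ?thesis .
    qed
    then have "exp (b*(t-s)) \<le> exp(\<bar>b\<bar>*T)" by simp
    moreover have "\<bar>f s\<bar> \<le> Mf" using s t by (intro Mf) auto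
    ultimately show ?thesis by (simp add: abs_mult mult_mono)
  qed
  have "norm (integral {0..t} (\<lambda>s. exp (b*(t-s)) * f s)) \<le> exp(\<bar>b\<bar>*T) * Mf * (t - 0)"
    by (rule integral_bound[OF _ contg gb]) (use t in auto)
  also have "\<dots> \<le> exp(\<bar>b\<bar>*T) * Mf * T" using t Mf0 by (intro mult_left_mono) auto
  finally have I: "\<bar>integral {0..t} (\<lambda>s. exp (b*(t-s)) * f s)\<bar> \<le> exp(\<bar>b\<bar>*T) * Mf * T" by simp
  have "\<bar>f t + b * integral {0..t} (\<lambda>s. exp (b*(t-s)) * f s)\<bar>
      \<le> \<bar>f t\<bar> + \<bar>b\<bar> * \<bar>integral {0..t} (\<lambda>s. exp (b*(t-s)) * f s)\<bar>"
    by (simp add: abs_mult[symmetric] abs_triangle_ineq)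
  also have "\<dots> \<le> Mf + \<bar>b\<bar> * (exp(\<bar>b\<bar>*T) * Mf * T)"
    using Mf[OF t] I by (intro add_mono mult_left_mono) auto
  also have "\<dots> = (1 + \<bar>b\<bar>*T*exp(\<bar>b\<bar>*T)) * Mf" by (simp add: algebra_simps)
  finally have "\<bar>f t + b * integral {0..t} (\<lambda>s. exp (b*(t-s)) * f s)\<bar> \<le> (1 + \<bar>b\<bar>*T*exp(\<bar>b\<bar>*T)) * Mf" .
  then have "\<bar>c\<bar> * \<bar>f t + b * integral {0..t} (\<lambda>s. exp (b*(t-s)) * f s)\<bar> \<le> \<bar>c\<bar> * ((1 + \<bar>b\<bar>*T*exp(\<bar>b\<bar>*T)) * Mf)"
    by (intro mult_left_mono) auto
  then show ?thesis by (simp add: abs_mult ac_simps)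
qed

lemma chain_dyadic:
  fixes f :: "real \<Rightarrow> real"
  assumes f0: "f 0 = 0" and a0: "0 \<le> a" and b0: "0 \<le> \<beta>"
    and inc: "\<And>N j. j < 2^N \<Longrightarrow> \<bar>f (real (Suc j) * T / 2^N) - f (real j * T / 2^N)\<bar> \<le> \<beta>^N * a"
  shows "m \<le> 2^n \<Longrightarrow> \<bar>f (real m * T / 2^n)\<bar> \<le> a * (\<Sum>N\<le>n. \<beta>^N)"
proof (induction n arbitrary: m)
  case 0
  then have "m = 0 \<or> m = 1" by auto
  then show ?case
  proof
    assume "m = 0" then show ?thesis using f0 a0 by simp
  next
    assume "m = 1" then show ?thesis using inc[of 0 0] f0 by simp
  qed
next
  case (Suc n)
  define m' where "m' = m div 2"
  have m': "m' \<le> 2^n" using Suc.prems unfolding m'_def by auto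
  have IH: "\<bar>f (real m' * T / 2^n)\<bar> \<le> a * (\<Sum>N\<le>n. \<beta>^N)" by (rule Suc.IH[OF m'])
  have S: "a * (\<Sum>N\<le>Suc n. \<beta>^N) = \<beta>^Suc n * a + a * (\<Sum>N\<le>n. \<beta>^N)"
    by (simp add: algebra_simps)
  show ?case
  proof (cases "even m")
    case True
    then have "real m * T / 2^Suc n = real m' * T / 2^n"
      unfolding m'_def by (auto simp: field_simps elim!: evenE)
    moreover have "\<beta>^Suc n * a \<ge> 0" using a0 b0 by simp
    ultimately show ?thesis using IH S by simp
  next
    case False
    then have m: "m = Suc (2*m')" unfolding m'_def by presburger
    have j: "2*m' < 2^Suc n" using Suc.prems m by simp
    have e1: "real (2*m') * T / 2^Suc n = real m' * T / 2^n" by (simp add: field_simps)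
    have "\<bar>f (real m * T / 2^Suc n)\<bar> \<le> \<bar>f (real (Suc (2*m')) * T / 2^Suc n) - f (real (2*m') * T / 2^Suc n)\<bar>
           + \<bar>f (real (2*m') * T / 2^Suc n)\<bar>" unfolding m by arith
    also have "\<dots> \<le> \<beta>^Suc n * a + a * (\<Sum>N\<le>n. \<beta>^N)"
      using inc[OF j] IH e1 by (intro add_mono) auto
    finally show ?thesis using S by simp
  qed
qed

lemma chain_bound:
  fixes f :: "real \<Rightarrow> real"
  assumes cont: "continuous_on {0..T} f" and T: "0 < T"
    and f0: "f 0 = 0" and a0: "0 \<le> a" and b0: "0 \<le> \<beta>" and b1: "\<beta> < 1"
    and inc: "\<And>N j. j < 2^N \<Longrightarrow> \<bar>f (real (Suc j) * T / 2^N) - f (real j * T / 2^N)\<bar> \<le> \<beta>^N * a"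
    and s: "s \<in> {0..T}"
  shows "\<bar>f s\<bar> \<le> a / (1 - \<beta>)"
proof -
  have dy: "\<bar>f (real m * T / 2^n)\<bar> \<le> a / (1 - \<beta>)" if "m \<le> 2^n" for m n
  proof -
    have "\<bar>f (real m * T / 2^n)\<bar> \<le> a * (\<Sum>N\<le>n. \<beta>^N)"
      by (rule chain_dyadic[OF f0 a0 b0 inc that])
    also have "\<dots> \<le> a * (\<Sum>N. \<beta>^N)"
      using b0 b1 by (intro mult_left_mono a0 sum_le_suminf summable_geometric) auto
    also have "\<dots> = a / (1 - \<beta>)" using b0 b1 by (simp add: suminf_geometric divide_inverse)
    finally show ?thesis .
  qed
  define m where "m n = nat \<lfloor>s * 2^n / T\<rfloor>" for n :: nat
  have mprops: "real (m n) \<le> s * 2^n / T \<and> s * 2^n / T - 1 \<le> real (m n) \<and> m n \<le> 2^n" for n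
  proof -
    have x0: "0 \<le> s * 2^n / T" using s T by auto
    have x1: "s * 2^n / T \<le> 2^n" using s T by (auto simp: divide_simps)
    have "real (m n) = real_of_int \<lfloor>s * 2^n / T\<rfloor>" unfolding m_def using x0 by simp
    moreover have "real_of_int \<lfloor>s * 2^n / T\<rfloor> \<le> 2^n"
      using x1 by (meson floor_le_iff order.trans of_int_floor_le)
    ultimately have r: "real (m n) \<le> 2^n" by simp
    then have "m n \<le> 2^n" by (metis of_nat_le_iff of_nat_numeral of_nat_power)
    moreover have "real (m n) \<le> s * 2^n / T \<and> s * 2^n / T - 1 \<le> real (m n)"
      using x0 \<open>real (m n) = _\<close> by linarith
    ultimately show ?thesis by blast
  qed
  define sn where "sn n = real (m n) * T / 2^n" for n
  have sn_in: "sn n \<in> {0..T}" for n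
  proof -
    have "real (m n) \<le> 2^n" using mprops[of n] by (metis of_nat_le_iff of_nat_numeral of_nat_power)
    then show ?thesis unfolding sn_def using T by (auto simp: divide_simps)
  qed
  have sn_close: "\<bar>sn n - s\<bar> \<le> T / 2^n" for n
  proof -
    have "sn n \<le> s" using mprops[of n] T unfolding sn_def by (auto simp: divide_simps)
    moreover have "s - T / 2^n \<le> sn n"
    proof -
      have "(s * 2^n / T - 1) * T / 2^n \<le> real (m n) * T / 2^n"
        using mprops[of n] T by (intro divide_right_mono mult_right_mono) auto
      moreover have "(s * 2^n / T - 1) * T / 2^n = s - T / 2^n" using T by (simp add: field_simps)
      ultimately show ?thesis unfolding sn_def by simp
    qed
    ultimately show ?thesis by simp
  qed
  have "(\<lambda>n. T / 2^n) \<longlonglongrightarrow> 0"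
    by (intro tendsto_divide_0[OF tendsto_const]) (simp add: filterlim_realpow_sequentially_gt1)
  then have "(\<lambda>n. sn n - s) \<longlonglongrightarrow> 0"
    by (rule Lim_null_comparison[rotated]) (use sn_close in auto)
  then have "sn \<longlonglongrightarrow> s" by (simp add: LIM_zero_iff)
  then have "(\<lambda>n. f (sn n)) \<longlonglongrightarrow> f s"
    by (rule continuous_on_tendsto_compose[OF cont]) (use s sn_in in auto)
  then have "(\<lambda>n. \<bar>f (sn n)\<bar>) \<longlonglongrightarrow> \<bar>f s\<bar>" by (rule tendsto_rabs)
  then show ?thesis
    by (rule LIMSEQ_le_const2) (use dy mprops in \<open>auto simp: sn_def\<close>)
qed

lemma bm_moment:
  assumes bm: "brownian_motion M W" and st: "0 \<le> s" "s < t"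
  shows "(\<integral>\<^sup>+ \<omega>. ennreal ((W t \<omega> - W s \<omega>)^(2*m)) \<partial>M)
        = ennreal (fact (2*m) / ((2 / (sqrt (t - s))\<^sup>2)^m * fact m))"
proof -
  have D: "distributed M lborel (\<lambda>\<omega>. W t \<omega> - W s \<omega>) (\<lambda>x. ennreal (normal_density 0 (sqrt (t - s)) x))"
    using bm st unfolding brownian_motion_def by blast
  have sig: "0 < sqrt (t - s)" using st by simp
  have "(\<integral>\<^sup>+ \<omega>. ennreal ((W t \<omega> - W s \<omega>)^(2*m)) \<partial>M)
      = (\<integral>\<^sup>+ x. ennreal (normal_density 0 (sqrt (t - s)) x) * ennreal (x^(2*m)) \<partial>lborel)"
    by (rule distributed_nn_integral[OF D, symmetric]) simp
  also have "\<dots> = (\<integral>\<^sup>+ x. ennreal (normal_density 0 (sqrt (t - s)) x * (x - 0)^(2*m)) \<partial>lborel)"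
    by (intro nn_integral_cong) (simp add: ennreal_mult' normal_density_nonneg)
  also have "\<dots> = ennreal (integral\<^sup>L lborel (\<lambda>x. normal_density 0 (sqrt (t - s)) x * (x - 0)^(2*m)))"
    by (rule nn_integral_eq_integral[OF integrable_normal_moment])
       (use st in \<open>auto simp: zero_le_even_power\<close>)
  also have "\<dots> = ennreal (fact (2*m) / ((2 / (sqrt (t - s))\<^sup>2)^m * fact m))"
    using has_bochner_integral_integral_eq[OF normal_moment_even[where k=m and \<mu>=0 and \<sigma>="sqrt (t - s)", OF sig]] by simp
  finally show ?thesis .
qed

definition incr :: "(real \<Rightarrow> 'a \<Rightarrow> real) \<Rightarrow> real \<Rightarrow> nat \<Rightarrow> nat \<Rightarrow> 'a \<Rightarrow> real" where
  "incr W T N j \<omega> = W (real (Suc j) * T / 2^N) \<omega> - W (real j * T / 2^N) \<omega>"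

definition Ufun :: "(real \<Rightarrow> 'a \<Rightarrow> real) \<Rightarrow> real \<Rightarrow> nat \<Rightarrow> 'a \<Rightarrow> ennreal" where
  "Ufun W T m \<omega> = (\<Sum>N. \<Sum>j<2^N. ennreal ((64/49)^(N*m) * (incr W T N j \<omega>)^(2*m)))"

lemma incr_moment_bound:
  assumes bm: "brownian_motion M W" and T: "0 < T"
  shows "(\<integral>\<^sup>+ \<omega>. ennreal ((incr W T N j \<omega>)^(2*m)) \<partial>M) \<le> ennreal ((T/2^N)^m * 2^m * fact m)"
proof -
  have st: "0 \<le> real j * T / 2^N" "real j * T / 2^N < real (Suc j) * T / 2^N"
    using T by (auto simp: divide_simps)
  have d: "real (Suc j) * T / 2^N - real j * T / 2^N = T / 2^N" by (simp add: field_simps)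
  have sq: "(sqrt (T / 2^N))\<^sup>2 = T / 2^N" using T by simp
  have "(\<integral>\<^sup>+ \<omega>. ennreal ((incr W T N j \<omega>)^(2*m)) \<partial>M)
        = ennreal (fact (2*m) / ((2 / (T / 2^N))^m * fact m))"
    unfolding incr_def using bm_moment[OF bm st, of m] d sq by simp
  also have "\<dots> \<le> ennreal ((T/2^N)^m * 2^m * fact m)"
  proof (rule ennreal_leI)
    have f: "(fact (2*m) :: real) \<le> 4^m * fact m * fact m"
      using fact_add_le[of m m] by (simp add: mult_2 power_add power_mult_distrib[symmetric])
    have "fact (2*m) / ((2 / (T / 2^N))^m * fact m) = (T/2^N)^m * (fact (2*m) / (2^m * fact m))"
      using T by (simp add: power_divide field_simps)
    also have "\<dots> \<le> (T/2^N)^m * (4^m * fact m * fact m / (2^m * fact m))"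
      using f T by (intro mult_left_mono divide_right_mono) auto
    also have "\<dots> = (T/2^N)^m * 2^m * fact m"
    proof -
      have "(4::real)^m = 2^m * 2^m" by (simp add: power_mult_distrib[symmetric])
      then show ?thesis by simp
    qed
    finally show "fact (2*m) / ((2 / (T / 2^N))^m * fact m) \<le> (T/2^N)^m * 2^m * fact m" .
  qed
  finally show ?thesis .
qed

lemma U_integral:
  assumes bm: "brownian_motion M W" and T: "0 < T" and m2: "2 \<le> m"
  shows "(\<integral>\<^sup>+ \<omega>. Ufun W T m \<omega> \<partial>M) \<le> ennreal (7 * (2*T)^m * fact m)"
proof -
  have Wm[measurable]: "\<And>t. W t \<in> borel_measurable M" using bm unfolding brownian_motion_def by blast
  have im[measurable]: "incr W T N j \<in> borel_measurable M" for N j unfolding incr_def by measurable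
  define \<rho> :: real where "\<rho> = 2 * (32/49)^m"
  define A :: real where "A = (2*T)^m * fact m"
  have A0: "0 \<le> A" unfolding A_def using T by simp
  have \<rho>0: "0 \<le> \<rho>" unfolding \<rho>_def by simp
  have \<rho>1: "\<rho> \<le> 2048/2401"
  proof -
    have "(32/49::real)^m \<le> (32/49)^2" using m2 by (intro power_decreasing) auto
    then show ?thesis unfolding \<rho>_def by (simp add: power2_eq_square)
  qed
  have tm: "(\<integral>\<^sup>+ \<omega>. (\<Sum>j<2^N. ennreal ((64/49)^(N*m) * (incr W T N j \<omega>)^(2*m))) \<partial>M)
      \<le> ennreal (A * \<rho>^N)" for N
  proof -
    have "(\<integral>\<^sup>+ \<omega>. (\<Sum>j<2^N. ennreal ((64/49)^(N*m) * (incr W T N j \<omega>)^(2*m))) \<partial>M)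
        = (\<Sum>j<(2::nat)^N. \<integral>\<^sup>+ \<omega>. ennreal ((64/49)^(N*m)) * ennreal ((incr W T N j \<omega>)^(2*m)) \<partial>M)"
      by (subst nn_integral_sum) (auto simp: ennreal_mult zero_le_even_power)
    also have "\<dots> = (\<Sum>j<(2::nat)^N. ennreal ((64/49)^(N*m)) * (\<integral>\<^sup>+ \<omega>. ennreal ((incr W T N j \<omega>)^(2*m)) \<partial>M))"
      by (intro sum.cong refl nn_integral_cmult) measurable
    also have "\<dots> \<le> (\<Sum>j<(2::nat)^N. ennreal ((64/49)^(N*m)) * ennreal ((T/2^N)^m * 2^m * fact m))"
      by (intro sum_mono mult_left_mono incr_moment_bound[OF bm T]) auto
    also have "\<dots> = of_nat (2^N) * (ennreal ((64/49)^(N*m)) * ennreal ((T/2^N)^m * 2^m * fact m))"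
      by simp
    also have "\<dots> = ennreal (2^N * ((64/49)^(N*m) * ((T/2^N)^m * 2^m * fact m)))"
    proof -
      have p: "0 \<le> (T/2^N)^m * 2^m * fact m" using T by simp
      have "of_nat (2^N) = ennreal (2^N)" by (simp add: ennreal_of_nat_eq_real_of_nat)
      then show ?thesis using p by (simp only: ennreal_mult[symmetric] zero_le_power zero_le_numeral divide_nonneg_nonneg mult_nonneg_nonneg)
    qed
    also have "2^N * ((64/49)^(N*m) * ((T/2^N)^m * 2^m * fact m)) = A * \<rho>^N"
    proof -
      have a: "(64/49::real)^(N*m) = ((64/49)^m)^N" by (simp add: power_mult[symmetric] mult.commute)
      have b: "(T/2^N)^m = T^m / (2^m)^N" by (simp add: power_divide power_mult[symmetric] mult.commute)
      have c: "((64/49::real)^m / 2^m) = (32/49)^m" by (simp add: power_divide[symmetric])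
      have "2^N * ((64/49)^(N*m) * ((T/2^N)^m * 2^m * fact m))
           = (2*T)^m * fact m * (2^N * (((64/49)^m)^N / (2^m)^N))"
        unfolding a b by (simp add: power_mult_distrib field_simps)
      also have "((64/49::real)^m)^N / (2^m)^N = ((32/49)^m)^N"
        by (simp add: power_divide[symmetric] c)
      finally show ?thesis unfolding A_def \<rho>_def by (simp add: power_mult_distrib)
    qed
    finally show ?thesis .
  qed
  have "(\<integral>\<^sup>+ \<omega>. Ufun W T m \<omega> \<partial>M)
      = (\<Sum>N. \<integral>\<^sup>+ \<omega>. (\<Sum>j<2^N. ennreal ((64/49)^(N*m) * (incr W T N j \<omega>)^(2*m))) \<partial>M)"
    unfolding Ufun_def by (rule nn_integral_suminf) measurable
  also have "\<dots> \<le> (\<Sum>N. ennreal (A * (2048/2401)^N))"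
  proof (intro suminf_le summableI)
    fix N
    have "A * \<rho>^N \<le> A * (2048/2401)^N" using A0 \<rho>0 \<rho>1 by (intro mult_left_mono power_mono) auto
    then show "(\<integral>\<^sup>+ \<omega>. (\<Sum>j<2^N. ennreal ((64/49)^(N*m) * (incr W T N j \<omega>)^(2*m))) \<partial>M)
      \<le> ennreal (A * (2048/2401)^N)" using tm[of N] by (meson ennreal_leI order.trans)
  qed
  also have "\<dots> = ennreal (A * (1 / (1 - 2048/2401)))"
  proof (rule suminf_ennreal_eq)
    have g: "(\<lambda>i. (2048/2401::real)^i) sums (1/(1-2048/2401))" by (rule geometric_sums) simp
    show "(\<lambda>i. A * (2048/2401) ^ i) sums (A * (1 / (1 - 2048/2401)))" by (rule sums_mult[OF g])
  qed (use A0 in auto)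
  also have "\<dots> \<le> ennreal (7 * (2*T)^m * fact m)"
    using A0 T unfolding A_def by (intro ennreal_leI) (simp add: mult_right_mono)
  finally show ?thesis .
qed

lemma path_sup_facts:
  assumes bm: "brownian_motion M W" and T: "0 < T" and w: "\<omega> \<in> space M"
  shows "bdd_above ((\<lambda>s. \<bar>W s \<omega>\<bar>) ` {0..T})"
    and "\<And>s. s \<in> {0..T} \<Longrightarrow> \<bar>W s \<omega>\<bar> \<le> (SUP s\<in>{0..T}. \<bar>W s \<omega>\<bar>)"
    and "0 \<le> (SUP s\<in>{0..T}. \<bar>W s \<omega>\<bar>)"
proof -
  have cont: "continuous_on {0..} (\<lambda>t. W t \<omega>)" using bm w unfolding brownian_motion_def by blast
  have "continuous_on {0..T} (\<lambda>s. \<bar>W s \<omega>\<bar>)"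
    by (intro continuous_intros continuous_on_subset[OF cont]) auto
  then have "compact ((\<lambda>s. \<bar>W s \<omega>\<bar>) ` {0..T})" by (intro compact_continuous_image) auto
  then show B: "bdd_above ((\<lambda>s. \<bar>W s \<omega>\<bar>) ` {0..T})"
    by (intro bounded_imp_bdd_above compact_imp_bounded)
  show U: "\<And>s. s \<in> {0..T} \<Longrightarrow> \<bar>W s \<omega>\<bar> \<le> (SUP s\<in>{0..T}. \<bar>W s \<omega>\<bar>)"
    by (rule cSUP_upper[OF _ B])
  show "0 \<le> (SUP s\<in>{0..T}. \<bar>W s \<omega>\<bar>)" using U[of 0] T by (meson abs_ge_zero atLeastAtMost_iff order.trans order_less_imp_le order_refl)
qed

lemma OU_sup_facts:
  assumes bm: "brownian_motion M W" and T: "0 < T" and w: "\<omega> \<in> space M"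
  shows "0 \<le> OU_sup b c W T \<omega>"
    and "OU_sup b c W T \<omega> \<le> \<bar>c\<bar> * (1 + \<bar>b\<bar>*T*exp(\<bar>b\<bar>*T)) * (SUP s\<in>{0..T}. \<bar>W s \<omega>\<bar>)"
proof -
  have cont: "continuous_on {0..} (\<lambda>t. W t \<omega>)" using bm w unfolding brownian_motion_def by blast
  define K where "K = \<bar>c\<bar> * (1 + \<bar>b\<bar>*T*exp(\<bar>b\<bar>*T)) * (SUP s\<in>{0..T}. \<bar>W s \<omega>\<bar>)"
  have bnd: "\<bar>OU_proc b c W t \<omega>\<bar> \<le> K" if t: "t \<in> {0..T}" for t
    unfolding OU_proc_def K_def
    by (rule OU_path_bound[OF cont T path_sup_facts(2)[OF bm T w] t])
  have B: "bdd_above ((\<lambda>s. \<bar>OU_proc b c W s \<omega>\<bar>) ` {0..T})"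
    using bnd by (auto intro!: bdd_aboveI2[where M=K])
  have "\<bar>OU_proc b c W 0 \<omega>\<bar> \<le> OU_sup b c W T \<omega>"
    unfolding OU_sup_def by (rule cSUP_upper[OF _ B]) (use T in auto)
  then show "0 \<le> OU_sup b c W T \<omega>" by (meson abs_ge_zero order.trans)
  show "OU_sup b c W T \<omega> \<le> K"
    unfolding OU_sup_def by (rule cSUP_least) (use T bnd in auto)
qed

lemma path_U_bound:
  assumes bm: "brownian_motion M W" and T: "0 < T" and w: "\<omega> \<in> space M" and m1: "1 \<le> m"
  shows "ennreal ((SUP s\<in>{0..T}. \<bar>W s \<omega>\<bar>)^(2*m)) \<le> ennreal (8^(2*m)) * Ufun W T m \<omega>"
proof (cases "Ufun W T m \<omega> = top")
  case True then show ?thesis by (simp add: ennreal_mult_top)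
next
  case False
  define u where "u = enn2real (Ufun W T m \<omega>)"
  have u0: "0 \<le> u" unfolding u_def by simp
  have Uu: "Ufun W T m \<omega> = ennreal u" unfolding u_def using False by (simp add: less_top)
  have cont: "continuous_on {0..} (\<lambda>t. W t \<omega>)" and W0: "W 0 \<omega> = 0"
    using bm w unfolding brownian_motion_def by blast+
  have tle: "(64/49)^(N*m) * (incr W T N j \<omega>)^(2*m) \<le> u" if j: "j < 2^N" for N j
  proof -
    have "ennreal ((64/49)^(N*m) * (incr W T N j \<omega>)^(2*m))
        \<le> (\<Sum>j<2^N. ennreal ((64/49)^(N*m) * (incr W T N j \<omega>)^(2*m)))"
      by (rule member_le_sum) (use j in auto)
    also have "\<dots> \<le> Ufun W T m \<omega>"
      unfolding Ufun_def
      using sum_le_suminf[OF summableI, of "{N}" "\<lambda>N. \<Sum>j<2^N. ennreal ((64/49)^(N*m) * (incr W T N j \<omega>)^(2*m))"]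
      by simp
    finally show ?thesis unfolding Uu using u0 by (simp add: ennreal_le_iff)
  qed
  have inc: "\<bar>W (real (Suc j) * T / 2^N) \<omega> - W (real j * T / 2^N) \<omega>\<bar> \<le> (7/8)^N * root (2*m) u"
    if j: "j < 2^N" for N j
  proof -
    define z where "z = (8/7)^N * \<bar>incr W T N j \<omega>\<bar>"
    have z0: "0 \<le> z" unfolding z_def by simp
    have "z^(2*m) = (64/49)^(N*m) * (incr W T N j \<omega>)^(2*m)"
    proof -
      have "z^(2*m) = ((8/7)^N)^(2*m) * \<bar>incr W T N j \<omega>\<bar>^(2*m)" unfolding z_def by (simp add: power_mult_distrib)
      also have "((8/7::real)^N)^(2*m) = (64/49)^(N*m)"
      proof -
        have "((8/7::real)^N)^(2*m) = (8/7)^(N*(2*m))" by (rule power_mult[symmetric])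
        also have "\<dots> = ((8/7)^2)^(N*m)" by (simp add: power_mult[symmetric] ac_simps)
        also have "\<dots> = (64/49)^(N*m)" by (simp add: power2_eq_square)
        finally show ?thesis .
      qed
      also have "\<bar>incr W T N j \<omega>\<bar>^(2*m) = (incr W T N j \<omega>)^(2*m)"
        by (simp add: power_mult power_even_abs)
      finally show ?thesis .
    qed
    then have "z^(2*m) \<le> u" using tle[OF j] by simp
    then have "root (2*m) (z^(2*m)) \<le> root (2*m) u" using m1 by (simp add: real_root_le_iff)
    then have "z \<le> root (2*m) u" using m1 z0 by (simp add: real_root_power_cancel)
    then have "(7/8)^N * z \<le> (7/8)^N * root (2*m) u" by (intro mult_left_mono) auto
    moreover have "(7/8)^N * z = \<bar>incr W T N j \<omega>\<bar>"
      unfolding z_def by (simp add: power_mult_distrib[symmetric])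
    ultimately show ?thesis unfolding incr_def by simp
  qed
  have r0: "0 \<le> root (2*m) u" using u0 by (simp add: real_root_ge_zero)
  have pw: "\<bar>W s \<omega>\<bar> \<le> root (2*m) u / (1 - 7/8)" if s: "s \<in> {0..T}" for s
    by (rule chain_bound[where f="\<lambda>s. W s \<omega>", OF continuous_on_subset[OF cont] T W0 r0 _ _ inc s]) auto
  have "(SUP s\<in>{0..T}. \<bar>W s \<omega>\<bar>) \<le> 8 * root (2*m) u"
    by (rule cSUP_least) (use T pw in \<open>auto simp: mult.commute\<close>)
  moreover have "0 \<le> (SUP s\<in>{0..T}. \<bar>W s \<omega>\<bar>)" by (rule path_sup_facts(3)[OF bm T w])
  ultimately have "(SUP s\<in>{0..T}. \<bar>W s \<omega>\<bar>)^(2*m) \<le> (8 * root (2*m) u)^(2*m)"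
    by (intro power_mono) auto
  also have "\<dots> = 8^(2*m) * u" using m1 u0 by (simp add: power_mult_distrib)
  finally have "ennreal ((SUP s\<in>{0..T}. \<bar>W s \<omega>\<bar>)^(2*m)) \<le> ennreal (8^(2*m) * u)" by (rule ennreal_leI)
  then show ?thesis unfolding Uu using u0 by (simp add: ennreal_mult[symmetric])
qed

lemma pow_le_1_plus: "0 \<le> (x::real) \<Longrightarrow> k \<le> n \<Longrightarrow> x^k \<le> 1 + x^n"
proof (cases "x \<le> 1")
  case True
  assume "0 \<le> x"
  then have "x^k \<le> 1" using True by (rule power_le_one)
  then show ?thesis using zero_le_power[OF \<open>0 \<le> x\<close>, of n] by linarith
next
  case False
  assume "k \<le> n"
  then have "x^k \<le> x^n" using False by (intro power_increasing) auto
  then show ?thesis by simp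
qed

lemma fact_mk_le: "(fact (k div 2 + 2) :: real) \<le> 8 * 2^k * fact (k div 2)"
proof -
  have "(fact (k div 2 + 2) :: real) \<le> 2^(k div 2 + 2) * fact (k div 2) * fact 2" by (rule fact_add_le)
  also have "\<dots> = 8 * 2^(k div 2) * fact (k div 2)" by (simp add: power_add)
  also have "\<dots> \<le> 8 * 2^k * fact (k div 2)"
    by (intro mult_right_mono mult_left_mono power_increasing) auto
  finally show ?thesis .
qed

lemma main_integrable:
  assumes bm: "brownian_motion M W" and T: "0 < T" and q: "negl_G q"
  shows "\<exists>H. H \<in> borel_measurable M \<and> (\<forall>\<omega>\<in>space M. ennreal (ps_abs q (OU_sup b c W T \<omega>)) \<le> H \<omega>)
           \<and> (\<integral>\<^sup>+ \<omega>. H \<omega> \<partial>M) < \<infinity>"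
proof -
  have Wm[measurable]: "\<And>t. W t \<in> borel_measurable M" using bm unfolding brownian_motion_def by blast
  have im[measurable]: "incr W T N j \<in> borel_measurable M" for N j unfolding incr_def by measurable
  have Um[measurable]: "Ufun W T m \<in> borel_measurable M" for m unfolding Ufun_def by measurable
  interpret prob_space M using bm unfolding brownian_motion_def by blast
  define K where "K = \<bar>c\<bar> * (1 + \<bar>b\<bar>*T*exp(\<bar>b\<bar>*T))"
  have K0: "0 \<le> K" unfolding K_def using T by simp
  define mk where "mk k = k div 2 + 2" for k :: nat
  define H where "H \<omega> = (\<Sum>k. ennreal (\<bar>q k\<bar> * K^k) * (1 + ennreal (8^(2*mk k)) * Ufun W T (mk k) \<omega>))" for \<omega>
  have Hm: "H \<in> borel_measurable M" unfolding H_def by measurable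
  have pt: "ennreal (ps_abs q (OU_sup b c W T \<omega>)) \<le> H \<omega>" if w: "\<omega> \<in> space M" for \<omega>
  proof -
    define Mw where "Mw = (SUP s\<in>{0..T}. \<bar>W s \<omega>\<bar>)"
    have Mw0: "0 \<le> Mw" unfolding Mw_def by (rule path_sup_facts(3)[OF bm T w])
    have "ps_abs q (OU_sup b c W T \<omega>) \<le> ps_abs q (K * Mw)"
      using OU_sup_facts[OF bm T w, of b c] q unfolding K_def Mw_def by (intro ps_abs_mono) auto
    also have "\<dots> = (\<Sum>k. \<bar>q k\<bar> * (K * Mw)^k)" unfolding ps_abs_def ..
    finally have "ennreal (ps_abs q (OU_sup b c W T \<omega>)) \<le> ennreal (\<Sum>k. \<bar>q k\<bar> * (K * Mw)^k)"
      by (rule ennreal_leI)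
    also have "\<dots> = (\<Sum>k. ennreal (\<bar>q k\<bar> * (K * Mw)^k))"
      by (rule suminf_ennreal2[symmetric]) (use K0 Mw0 negl_G_summable(2)[OF q] in auto)
    also have "\<dots> \<le> H \<omega>" unfolding H_def
    proof (intro suminf_le summableI)
      fix k
      have "Mw^k \<le> 1 + Mw^(2*mk k)" using Mw0 by (intro pow_le_1_plus) (auto simp: mk_def)
      then have "ennreal (Mw^k) \<le> 1 + ennreal (Mw^(2*mk k))"
        using Mw0 by (metis ennreal_leI ennreal_plus ennreal_1 zero_le_one zero_le_power)
      also have "\<dots> \<le> 1 + ennreal (8^(2*mk k)) * Ufun W T (mk k) \<omega>"
        unfolding Mw_def by (intro add_left_mono path_U_bound[OF bm T w]) (auto simp: mk_def)
      finally have X: "ennreal (Mw^k) \<le> 1 + ennreal (8^(2*mk k)) * Ufun W T (mk k) \<omega>" .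
      have "ennreal (\<bar>q k\<bar> * (K * Mw)^k) = ennreal (\<bar>q k\<bar> * K^k) * ennreal (Mw^k)"
        using K0 Mw0 by (simp add: ennreal_mult power_mult_distrib mult.assoc)
      also have "\<dots> \<le> ennreal (\<bar>q k\<bar> * K^k) * (1 + ennreal (8^(2*mk k)) * Ufun W T (mk k) \<omega>)"
        by (intro mult_left_mono X) auto
      finally show "ennreal (\<bar>q k\<bar> * (K * Mw)^k) \<le> ennreal (\<bar>q k\<bar> * K^k) * (1 + ennreal (8^(2*mk k)) * Ufun W T (mk k) \<omega>)" .
    qed
    finally show ?thesis .
  qed
  define L where "L = max 1 (128 * T)"
  have L1: "1 \<le> L" unfolding L_def by simp
  define bk where "bk k = \<bar>q k\<bar> * K^k * (1 + 8^(2*mk k) * (7 * (2*T)^(mk k) * fact (mk k)))" for k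
  have bk0: "0 \<le> bk k" for k unfolding bk_def using K0 T by simp
  have bk_sum: "summable bk"
  proof -
    have s1: "summable (\<lambda>k. \<bar>q k\<bar> * K^k)" using negl_G_summable(2)[OF q, of K] .
    have s2: "summable (\<lambda>k. \<bar>q k\<bar> * fact (k div 2) * (2*L*K)^k)"
      by (rule negl_G_summable_fact[OF q]) (use K0 L1 in simp)
    have s: "summable (\<lambda>k. \<bar>q k\<bar> * K^k + (56 * L^2) * (\<bar>q k\<bar> * fact (k div 2) * (2*L*K)^k))"
      using summable_add[OF s1 summable_mult[OF s2, of "56 * L^2"]] .
    have le: "bk k \<le> \<bar>q k\<bar> * K^k + (56 * L^2) * (\<bar>q k\<bar> * fact (k div 2) * (2*L*K)^k)" for k
    proof -
      define n where "n = mk k"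
      have n2: "n \<le> k + 2" unfolding n_def mk_def by simp
      have e0: "(8::real)^(2*n) = 64^n" by (simp add: power_mult)
      have e1: "(8::real)^(2*n) * (2*T)^n = (128*T)^n"
        unfolding e0 power_mult_distrib[symmetric] by simp
      have "(128*T)^n \<le> L^n" using T unfolding L_def by (intro power_mono) auto
      also have "\<dots> \<le> L^(k+2)" using L1 n2 by (intro power_increasing) auto
      also have "\<dots> = L^2 * L^k" by (simp add: power_add power2_eq_square)
      finally have p: "(128*T)^n \<le> L^2 * L^k" .
      have f: "fact n \<le> 8 * 2^k * (fact (k div 2) :: real)" unfolding n_def mk_def by (rule fact_mk_le)
      have "8^(2*n) * (7 * (2*T)^n * fact n) = 7 * ((8^(2*n) * (2*T)^n) * (fact n :: real))"
        by (simp only: mult.assoc mult.left_commute)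
      also have "\<dots> = 7 * ((128*T)^n * fact n)" by (simp only: e1)
      also have "\<dots> \<le> 7 * ((L^2 * L^k) * (8 * 2^k * fact (k div 2)))"
      proof -
        have "(128*T)^n * fact n \<le> (L^2 * L^k) * (8 * 2^k * fact (k div 2))"
          by (rule mult_mono[OF p f]) (use L1 in auto)
        then show ?thesis by (rule mult_left_mono) simp
      qed
      also have "\<dots> = 56 * L^2 * (2*L)^k * fact (k div 2)"
        by (simp add: power_mult_distrib)
      finally have A: "8^(2*n) * (7 * (2*T)^n * fact n) \<le> 56 * L^2 * (2*L)^k * fact (k div 2)" .
      have "bk k = \<bar>q k\<bar> * K^k + \<bar>q k\<bar> * K^k * (8^(2*n) * (7 * (2*T)^n * fact n))"
        unfolding bk_def n_def by (simp only: distrib_left mult_1_right)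
      also have "\<dots> \<le> \<bar>q k\<bar> * K^k + \<bar>q k\<bar> * K^k * (56 * L^2 * (2*L)^k * fact (k div 2))"
      proof -
        have "\<bar>q k\<bar> * K^k \<ge> 0" using K0 by simp
        then show ?thesis using A by (simp add: mult_left_mono)
      qed
      also have "\<bar>q k\<bar> * K^k * (56 * L^2 * (2*L)^k * fact (k div 2)) = (56 * L^2) * (\<bar>q k\<bar> * fact (k div 2) * (2*L*K)^k)"
        by (simp add: power_mult_distrib)
      finally show ?thesis by simp
    qed
    show ?thesis
      by (rule summable_comparison_test[OF _ s]) (use le bk0 in auto)
  qed
  have "(\<integral>\<^sup>+ \<omega>. H \<omega> \<partial>M) = (\<Sum>k. \<integral>\<^sup>+ \<omega>. ennreal (\<bar>q k\<bar> * K^k) * (1 + ennreal (8^(2*mk k)) * Ufun W T (mk k) \<omega>) \<partial>M)"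
    unfolding H_def by (rule nn_integral_suminf) measurable
  also have "\<dots> \<le> (\<Sum>k. ennreal (bk k))"
  proof (intro suminf_le summableI)
    fix k
    have m2: "2 \<le> mk k" unfolding mk_def by simp
    have "(\<integral>\<^sup>+ \<omega>. ennreal (\<bar>q k\<bar> * K^k) * (1 + ennreal (8^(2*mk k)) * Ufun W T (mk k) \<omega>) \<partial>M)
        = ennreal (\<bar>q k\<bar> * K^k) * (1 + ennreal (8^(2*mk k)) * (\<integral>\<^sup>+ \<omega>. Ufun W T (mk k) \<omega> \<partial>M))"
      by (simp add: nn_integral_cmult nn_integral_add emeasure_space_1)
    also have "\<dots> \<le> ennreal (\<bar>q k\<bar> * K^k) * (1 + ennreal (8^(2*mk k)) * ennreal (7 * (2*T)^(mk k) * fact (mk k)))"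
      by (intro mult_left_mono add_left_mono U_integral[OF bm T m2]) auto
    also have "\<dots> = ennreal (bk k)"
    proof -
      define B :: real where "B = 8^(2*mk k) * (7 * (2*T)^(mk k) * fact (mk k))"
      have B0: "0 \<le> B" unfolding B_def using T by simp
      have "ennreal (8^(2*mk k)) * ennreal (7 * (2*T)^(mk k) * fact (mk k)) = ennreal B"
        unfolding B_def using T by (simp add: ennreal_mult)
      moreover have "1 + ennreal B = ennreal (1 + B)" using B0 by simp
      moreover have "ennreal (\<bar>q k\<bar> * K^k) * ennreal (1 + B) = ennreal (\<bar>q k\<bar> * K^k * (1 + B))"
        using B0 K0 by (simp add: ennreal_mult)
      ultimately show ?thesis unfolding bk_def B_def by simp
    qed
    finally show "(\<integral>\<^sup>+ \<omega>. ennreal (\<bar>q k\<bar> * K^k) * (1 + ennreal (8^(2*mk k)) * Ufun W T (mk k) \<omega>) \<partial>M) \<le> ennreal (bk k)" .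
  qed
  also have "\<dots> < \<infinity>" using ennreal_suminf_neq_top[OF bk_sum bk0] by (simp add: less_top)
  finally show ?thesis using Hm pt by blast
qed

lemma sq_sum_le: "((x::real) + y)^2 \<le> 2*x^2 + 2*y^2"
proof -
  have "0 \<le> (x - y)^2" by simp
  then show ?thesis by (simp add: power2_eq_square algebra_simps)
qed

lemma estimable_closed:
  assumes bm: "brownian_motion M W" and T: "0 < T"
    and EF: "estimable M b c W T F" and EG: "estimable M b c W T G"
  shows "estimable M b c W T (\<lambda>t x \<omega>. F t x \<omega> + G t x \<omega>) \<and>
         estimable M b c W T (\<lambda>t x \<omega>. F t x \<omega> * G t x \<omega>)"
proof -
  obtain r1 where r1: "negl_G r1"
    and F: "\<And>t x. t \<in> {0..T} \<Longrightarrow> AE \<omega> in M. \<bar>F t x \<omega>\<bar> \<le> ps_abs r1 \<bar>x\<bar> + ps_abs r1 (OU_sup b c W T \<omega>)"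
    using EF unfolding estimable_def negligible_iff by blast
  obtain r2 where r2: "negl_G r2"
    and G: "\<And>t x. t \<in> {0..T} \<Longrightarrow> AE \<omega> in M. \<bar>G t x \<omega>\<bar> \<le> ps_abs r2 \<bar>x\<bar> + ps_abs r2 (OU_sup b c W T \<omega>)"
    using EG unfolding estimable_def negligible_iff by blast
  define r where "r k = \<bar>r1 k\<bar> + \<bar>r2 k\<bar>" for k
  have r: "negl_G r" unfolding r_def by (rule negl_G_add[OF r1 r2])
  have radd: "ps_abs r u = ps_abs r1 u + ps_abs r2 u" for u
    unfolding r_def by (rule ps_abs_add[OF r1 r2])
  have le1: "ps_abs r1 u \<le> ps_abs r u" "ps_abs r2 u \<le> ps_abs r u" if "0 \<le> u" for u
    using radd[of u] ps_abs_nonneg[OF that r1] ps_abs_nonneg[OF that r2] by auto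
  have key: "AE \<omega> in M. \<bar>F t x \<omega>\<bar> \<le> ps_abs r \<bar>x\<bar> + ps_abs r (OU_sup b c W T \<omega>) \<and>
                         \<bar>G t x \<omega>\<bar> \<le> ps_abs r \<bar>x\<bar> + ps_abs r (OU_sup b c W T \<omega>)"
    if t: "t \<in> {0..T}" for t x
    using F[OF t, of x] G[OF t, of x] AE_space
  proof eventually_elim
    case (elim \<omega>)
    have v0: "0 \<le> OU_sup b c W T \<omega>" by (rule OU_sup_facts(1)[OF bm T elim(3)])
    have "\<bar>F t x \<omega>\<bar> \<le> ps_abs r \<bar>x\<bar> + ps_abs r (OU_sup b c W T \<omega>)"
      using elim(1) le1(1)[of "\<bar>x\<bar>"] le1(1)[OF v0] by simp
    moreover have "\<bar>G t x \<omega>\<bar> \<le> ps_abs r \<bar>x\<bar> + ps_abs r (OU_sup b c W T \<omega>)"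
      using elim(2) le1(2)[of "\<bar>x\<bar>"] le1(2)[OF v0] by simp
    ultimately show ?case by blast
  qed
  have E1: "estimable M b c W T (\<lambda>t x \<omega>. F t x \<omega> + G t x \<omega>)"
    unfolding estimable_def
  proof (intro exI conjI ballI allI)
    show "negligible_dfact r" using r negligible_iff by blast
    fix t x assume t: "t \<in> {0..T}"
    show "AE \<omega> in M. \<bar>F t x \<omega> + G t x \<omega>\<bar> \<le> ps_abs r \<bar>x\<bar> + ps_abs r (OU_sup b c W T \<omega>)"
      using F[OF t, of x] G[OF t, of x]
    proof eventually_elim
      case (elim \<omega>)
      have "\<bar>F t x \<omega> + G t x \<omega>\<bar> \<le> \<bar>F t x \<omega>\<bar> + \<bar>G t x \<omega>\<bar>" by (rule abs_triangle_ineq)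
      also have "\<dots> \<le> (ps_abs r1 \<bar>x\<bar> + ps_abs r1 (OU_sup b c W T \<omega>)) + (ps_abs r2 \<bar>x\<bar> + ps_abs r2 (OU_sup b c W T \<omega>))"
        using elim by (rule add_mono)
      also have "\<dots> = ps_abs r \<bar>x\<bar> + ps_abs r (OU_sup b c W T \<omega>)" by (simp add: radd)
      finally show ?case .
    qed
  qed
  have E2: "estimable M b c W T (\<lambda>t x \<omega>. F t x \<omega> * G t x \<omega>)"
    unfolding estimable_def
  proof (intro exI conjI ballI allI)
    show "negligible_dfact (csq r)" using negl_G_csq[OF r] negligible_iff by blast
    fix t x assume t: "t \<in> {0..T}"
    show "AE \<omega> in M. \<bar>F t x \<omega> * G t x \<omega>\<bar> \<le> ps_abs (csq r) \<bar>x\<bar> + ps_abs (csq r) (OU_sup b c W T \<omega>)"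
      using key[OF t, of x]
    proof eventually_elim
      case (elim \<omega>)
      define a where "a = ps_abs r \<bar>x\<bar> + ps_abs r (OU_sup b c W T \<omega>)"
      have "\<bar>F t x \<omega> * G t x \<omega>\<bar> = \<bar>F t x \<omega>\<bar> * \<bar>G t x \<omega>\<bar>" by (simp add: abs_mult)
      also have "\<dots> \<le> a * a" using elim unfolding a_def by (intro mult_mono) auto
      also have "\<dots> = a^2" by (simp add: power2_eq_square)
      also have "\<dots> \<le> 2 * (ps_abs r \<bar>x\<bar>)^2 + 2 * (ps_abs r (OU_sup b c W T \<omega>))^2"
        unfolding a_def by (rule sq_sum_le)
      also have "\<dots> = ps_abs (csq r) \<bar>x\<bar> + ps_abs (csq r) (OU_sup b c W T \<omega>)"
        by (simp add: ps_abs_csq[OF r])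
      finally show ?case .
    qed
  qed
  show ?thesis using E1 E2 by blast
qed

theorem lemma6p6:
  fixes M :: "'a measure" and W :: "real \<Rightarrow> 'a \<Rightarrow> real" and b c T :: real
  assumes "brownian_motion M W" and "c \<noteq> 0" and "T > 0"
  shows "(\<forall>F G. estimable M b c W T F \<and> estimable M b c W T G \<longrightarrow>
             estimable M b c W T (\<lambda>t x \<omega>. F t x \<omega> + G t x \<omega>) \<and>
             estimable M b c W T (\<lambda>t x \<omega>. F t x \<omega> * G t x \<omega>))
       \<and> (\<forall>q. negligible_dfact q \<longrightarrow>
             (\<integral>\<^sup>+ \<omega>. ennreal (ps_abs q (OU_sup b c W T \<omega>)) \<partial>M) < \<infinity>)
       \<and> (\<forall>F. estimable M b c W T F \<longrightarrow>
             (\<exists>q C. negligible_dfact q \<and>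
                (\<forall>t\<in>{0..T}. \<forall>x. (\<integral>\<^sup>+ \<omega>. ennreal \<bar>F t x \<omega>\<bar> \<partial>M) \<le> ennreal (ps_abs q \<bar>x\<bar> + C))))"
proof (intro conjI allI impI)
  note bm = assms(1) and T = assms(3)
  interpret prob_space M using bm unfolding brownian_motion_def by blast
  fix F G assume "estimable M b c W T F \<and> estimable M b c W T G"
  then show "estimable M b c W T (\<lambda>t x \<omega>. F t x \<omega> + G t x \<omega>)"
    "estimable M b c W T (\<lambda>t x \<omega>. F t x \<omega> * G t x \<omega>)"
    using estimable_closed[OF bm T] by blast+
next
  note bm = assms(1) and T = assms(3)
  fix q assume "negligible_dfact q"
  then have q: "negl_G q" by (simp add: negligible_iff)
  obtain H where H: "H \<in> borel_measurable M"
    "\<forall>\<omega>\<in>space M. ennreal (ps_abs q (OU_sup b c W T \<omega>)) \<le> H \<omega>" "(\<integral>\<^sup>+ \<omega>. H \<omega> \<partial>M) < \<infinity>"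
    using main_integrable[OF bm T q, of b c] by blast
  have "(\<integral>\<^sup>+ \<omega>. ennreal (ps_abs q (OU_sup b c W T \<omega>)) \<partial>M) \<le> (\<integral>\<^sup>+ \<omega>. H \<omega> \<partial>M)"
    using H(2) by (intro nn_integral_mono) auto
  then show "(\<integral>\<^sup>+ \<omega>. ennreal (ps_abs q (OU_sup b c W T \<omega>)) \<partial>M) < \<infinity>" using H(3) by (rule le_less_trans)
next
  note bm = assms(1) and T = assms(3)
  interpret prob_space M using bm unfolding brownian_motion_def by blast
  fix F assume "estimable M b c W T F"
  then obtain r where r: "negl_G r"
    and Fb: "\<And>t x. t \<in> {0..T} \<Longrightarrow> AE \<omega> in M. \<bar>F t x \<omega>\<bar> \<le> ps_abs r \<bar>x\<bar> + ps_abs r (OU_sup b c W T \<omega>)"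
    unfolding estimable_def negligible_iff by blast
  obtain H where Hm[measurable]: "H \<in> borel_measurable M"
    and H2: "\<forall>\<omega>\<in>space M. ennreal (ps_abs r (OU_sup b c W T \<omega>)) \<le> H \<omega>"
    and H3: "(\<integral>\<^sup>+ \<omega>. H \<omega> \<partial>M) < \<infinity>"
    using main_integrable[OF bm T r, of b c] by blast
  define C where "C = enn2real (\<integral>\<^sup>+ \<omega>. H \<omega> \<partial>M)"
  have C0: "0 \<le> C" unfolding C_def by simp
  have IC: "(\<integral>\<^sup>+ \<omega>. H \<omega> \<partial>M) = ennreal C" unfolding C_def using H3 by (simp add: less_top)
  show "\<exists>q C. negligible_dfact q \<and>
                (\<forall>t\<in>{0..T}. \<forall>x. (\<integral>\<^sup>+ \<omega>. ennreal \<bar>F t x \<omega>\<bar> \<partial>M) \<le> ennreal (ps_abs q \<bar>x\<bar> + C))"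
  proof (intro exI conjI ballI allI)
    show "negligible_dfact r" using r by (simp add: negligible_iff)
    fix t x assume t: "t \<in> {0..T}"
    have R0: "0 \<le> ps_abs r \<bar>x\<bar>" by (rule ps_abs_nonneg[OF _ r]) simp
    have "AE \<omega> in M. ennreal \<bar>F t x \<omega>\<bar> \<le> ennreal (ps_abs r \<bar>x\<bar>) + H \<omega>"
      using Fb[OF t, of x] AE_space
    proof eventually_elim
      case (elim \<omega>)
      have v0: "0 \<le> OU_sup b c W T \<omega>" by (rule OU_sup_facts(1)[OF bm T elim(2)])
      have R1: "0 \<le> ps_abs r (OU_sup b c W T \<omega>)" by (rule ps_abs_nonneg[OF v0 r])
      have "ennreal \<bar>F t x \<omega>\<bar> \<le> ennreal (ps_abs r \<bar>x\<bar> + ps_abs r (OU_sup b c W T \<omega>))"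
        using elim(1) by (rule ennreal_leI)
      also have "\<dots> = ennreal (ps_abs r \<bar>x\<bar>) + ennreal (ps_abs r (OU_sup b c W T \<omega>))"
        using R0 R1 by simp
      also have "\<dots> \<le> ennreal (ps_abs r \<bar>x\<bar>) + H \<omega>"
        using H2 elim(2) by (intro add_left_mono) auto
      finally show ?case .
    qed
    then have "(\<integral>\<^sup>+ \<omega>. ennreal \<bar>F t x \<omega>\<bar> \<partial>M) \<le> (\<integral>\<^sup>+ \<omega>. ennreal (ps_abs r \<bar>x\<bar>) + H \<omega> \<partial>M)"
      by (rule nn_integral_mono_AE)
    also have "\<dots> = ennreal (ps_abs r \<bar>x\<bar>) + (\<integral>\<^sup>+ \<omega>. H \<omega> \<partial>M)"
      by (simp add: nn_integral_add emeasure_space_1)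
    also have "\<dots> = ennreal (ps_abs r \<bar>x\<bar> + C)" unfolding IC using R0 C0 by simp
    finally show "(\<integral>\<^sup>+ \<omega>. ennreal \<bar>F t x \<omega>\<bar> \<partial>M) \<le> ennreal (ps_abs r \<bar>x\<bar> + C)" .
  qed
qed

end
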